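(* There exist constants $c_5,c_6>0$ such that for all $n\ge1$, the probability that the space-time box $[0,n]\times\left[0,n^{\frac{2-\delta}{2(1-\delta)}}\right]$ is not crossed vertically under the critical contact process is at most $c_5\exp\left(-c_6 n^{\delta/2}\right)$.
   Context: The critical contact process is the one-dimensional contact process on $\mathbb{Z}$ with infection rate $\lambda_c$ (the critical rate) and recovery rate $1$, built from the standard graphical construction. A space-time box $[0,n_1]\times[0,n_2]$ is crossed vertically if there exist sites $x,y\in[0,n_1]$ and an open path in the graphical construction from $(x,0)$ to $(y,n_2)$ contained in the box; it is crossed horizontally if there exist times $0\le t_1<t_2\le n_2$ and an open path from $(0,t_1)$ to $(n_1,t_2)$ contained in the box. The constant $\delta\in(0,1)$ is the box-crossing exponent: there exist a function $w(n)\to\infty$ and constants $c>0$, $p>0$ with $w(n)\le c\,n^{1-\delta}$ for all $n$ such that, for every $n\in\mathbb{N}$, the box $[0,w(n)]\times[0,n]$ is crossed both horizontally and vertically with probability at least $p$. *)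

theory Defs
  imports "HOL-Probability.Probability"
begin

text \<open>A sample point w assigns to each triple (x, k, i) a positive real: for site x, channel k
  (k = 0: recovery marks at x, rate 1; k = 1: infection arrows x to x+1, rate l;
  k = 2: infection arrows x to x-1, rate l; other channels unused) and index i, the
  i-th interarrival time of the corresponding Poisson process on [0, infinity).
  The interarrival times are independent exponentials, so each channel is a Poisson
  point process of the given rate, and all channels are independent.\<close>

type_synonym gc = "int \<times> nat \<times> nat \<Rightarrow> real"

definition chan_rate :: "real \<Rightarrow> nat \<Rightarrow> real" where
  "chan_rate l k = (if k = 0 then 1 else l)"

definition CP :: "real \<Rightarrow> gc measure" where
  "CP l = PiM UNIV (\<lambda>(x, k, i). density lborel (exponential_density (chan_rate l k)))"

definition marks :: "gc \<Rightarrow> int \<Rightarrow> nat \<Rightarrow> real set" where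
  "marks w x k = {(\<Sum>j\<le>i. w (x, k, j)) | i. True}"

definition recovery :: "gc \<Rightarrow> int \<Rightarrow> real \<Rightarrow> bool" where
  "recovery w x t \<longleftrightarrow> t \<in> marks w x 0"

definition arrow :: "gc \<Rightarrow> int \<Rightarrow> int \<Rightarrow> real \<Rightarrow> bool" where
  "arrow w x y t \<longleftrightarrow> (y = x + 1 \<and> t \<in> marks w x 1) \<or> (y = x - 1 \<and> t \<in> marks w x 2)"

text \<open>Open path from (x,s) to (y,t) using only sites in S: the path sits at site xs i during
  the time interval [ts i, ts (i+1)], i = 0..k, with ts 0 = s, ts (k+1) = t; it jumps from
  xs i to xs (i+1) along an infection arrow at time ts (i+1), and meets no recovery mark.\<close>

definition open_path :: "gc \<Rightarrow> int set \<Rightarrow> real \<Rightarrow> int \<Rightarrow> real \<Rightarrow> int \<Rightarrow> bool" where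
  "open_path w S s x t y \<longleftrightarrow> s \<le> t \<and>
     (\<exists>(k::nat) (xs::nat \<Rightarrow> int) (ts::nat \<Rightarrow> real).
        ts 0 = s \<and> ts (Suc k) = t \<and> xs 0 = x \<and> xs k = y \<and>
        (\<forall>i\<le>k. ts i \<le> ts (Suc i) \<and> xs i \<in> S \<and>
                 (\<forall>u. ts i < u \<and> u \<le> ts (Suc i) \<longrightarrow> \<not> recovery w (xs i) u)) \<and>
        (\<forall>i<k. arrow w (xs i) (xs (Suc i)) (ts (Suc i))))"

definition survives :: "gc \<Rightarrow> bool" where
  "survives w \<longleftrightarrow> (\<forall>t\<ge>0. \<exists>y. open_path w UNIV 0 0 t y)"

definition lambda_c :: real where
  "lambda_c = Inf {l. 0 < l \<and> measure (CP l) {w \<in> space (CP l). survives w} > 0}"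

definition box_sites :: "int \<Rightarrow> int set" where
  "box_sites n1 = {z. 0 \<le> z \<and> z \<le> n1}"

definition crossed_vert :: "gc \<Rightarrow> int \<Rightarrow> real \<Rightarrow> bool" where
  "crossed_vert w n1 n2 \<longleftrightarrow>
     (\<exists>x y. x \<in> box_sites n1 \<and> y \<in> box_sites n1 \<and> open_path w (box_sites n1) 0 x n2 y)"

definition crossed_horiz :: "gc \<Rightarrow> int \<Rightarrow> real \<Rightarrow> bool" where
  "crossed_horiz w n1 n2 \<longleftrightarrow>
     (\<exists>t1 t2. 0 \<le> t1 \<and> t1 < t2 \<and> t2 \<le> n2 \<and> open_path w (box_sites n1) t1 0 t2 n1)"

end

theory Submission
  imports Defs
begin

lemma marks_local: "(\<forall>k i. w (z,k,i) = w' (z,k,i)) \<Longrightarrow> marks w z k = marks w' z k"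
  unfolding marks_def by simp

lemma op_local1:
  assumes loc: "\<forall>z\<in>S. \<forall>k i. w (z,k,i) = w' (z,k,i)" and op: "open_path w S s x t y"
  shows "open_path w' S s x t y"
proof -
  from op obtain k xs ts where st: "s \<le> t" and h: "ts 0 = s" "ts (Suc k) = t" "xs 0 = x" "xs k = y"
    and A: "\<forall>i\<le>k. ts i \<le> ts (Suc i) \<and> xs i \<in> S \<and>
                 (\<forall>u. ts i < u \<and> u \<le> ts (Suc i) \<longrightarrow> \<not> recovery w (xs i) u)"
    and B: "\<forall>i<k. arrow w (xs i) (xs (Suc i)) (ts (Suc i))"
    unfolding open_path_def by blast
  have A': "\<forall>i\<le>k. ts i \<le> ts (Suc i) \<and> xs i \<in> S \<and>
                 (\<forall>u. ts i < u \<and> u \<le> ts (Suc i) \<longrightarrow> \<not> recovery w' (xs i) u)"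
    using A loc marks_local[of w _ w'] unfolding recovery_def by metis
  have B': "\<forall>i<k. arrow w' (xs i) (xs (Suc i)) (ts (Suc i))"
  proof (intro allI impI)
    fix i assume "i < k"
    then have "xs i \<in> S" "arrow w (xs i) (xs (Suc i)) (ts (Suc i))" using A B by auto
    then show "arrow w' (xs i) (xs (Suc i)) (ts (Suc i))"
      using loc marks_local[of w "xs i" w'] unfolding arrow_def by metis
  qed
  show ?thesis unfolding open_path_def using st h A' B' by blast
qed

lemma op_local:
  assumes loc: "\<forall>z\<in>S. \<forall>k i. w (z,k,i) = w' (z,k,i)"
  shows "open_path w S s x t y = open_path w' S s x t y"
  using op_local1[OF loc] op_local1[of S w' w] loc by metis

lemma op_shift:
  assumes op: "open_path (\<lambda>(z,k,i). w (z+a,k,i)) S s x t y"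
  shows "open_path w {z. z - a \<in> S} s (x+a) t (y+a)"
proof -
  let ?v = "(\<lambda>(z,k,i). w (z+a,k,i))"
  have mk: "marks ?v z k = marks w (z+a) k" for z k unfolding marks_def by simp
  from op obtain k xs ts where st: "s \<le> t" and h: "ts 0 = s" "ts (Suc k) = t" "xs 0 = x" "xs k = y"
    and A: "\<forall>i\<le>k. ts i \<le> ts (Suc i) \<and> xs i \<in> S \<and>
                 (\<forall>u. ts i < u \<and> u \<le> ts (Suc i) \<longrightarrow> \<not> recovery ?v (xs i) u)"
    and B: "\<forall>i<k. arrow ?v (xs i) (xs (Suc i)) (ts (Suc i))"
    unfolding open_path_def by blast
  let ?xs = "\<lambda>i. xs i + a"
  have A': "\<forall>i\<le>k. ts i \<le> ts (Suc i) \<and> ?xs i \<in> {z. z - a \<in> S} \<and>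
                 (\<forall>u. ts i < u \<and> u \<le> ts (Suc i) \<longrightarrow> \<not> recovery w (?xs i) u)"
    using A by (simp add: recovery_def mk)
  have B': "\<forall>i<k. arrow w (?xs i) (?xs (Suc i)) (ts (Suc i))"
    using B by (auto simp add: arrow_def mk)
  show ?thesis unfolding open_path_def
    apply (rule conjI[OF st])
    apply (rule exI[of _ k], rule exI[of _ ?xs], rule exI[of _ ts])
    using h A' B' by simp
qed

lemma find_idx:
  assumes "\<forall>i\<le>k. ts i \<le> ts (Suc i)" "ts 0 \<le> (t'::real)" "t' \<le> ts (Suc k)"
  shows "\<exists>j\<le>k. ts j \<le> t' \<and> t' \<le> ts (Suc j)"
  using assms
proof (induction k)
  case 0 then show ?case by auto
next
  case (Suc k)
  show ?case
  proof (cases "t' \<le> ts (Suc k)")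
    case True
    then obtain j where "j \<le> k" "ts j \<le> t' \<and> t' \<le> ts (Suc j)" using Suc by auto
    then show ?thesis by (intro exI[of _ j]) auto
  next
    case False then show ?thesis using Suc.prems by (intro exI[of _ "Suc k"]) auto
  qed
qed

lemma op_trunc:
  assumes op: "open_path w S s x t y" and sub: "S \<subseteq> S'" and t': "s \<le> t'" "t' \<le> t"
  shows "\<exists>y'. open_path w S' s x t' y'"
proof -
  from op obtain k xs ts where h: "ts 0 = s" "ts (Suc k) = t" "xs 0 = x" "xs k = y"
    and A: "\<forall>i\<le>k. ts i \<le> ts (Suc i) \<and> xs i \<in> S \<and>
                 (\<forall>u. ts i < u \<and> u \<le> ts (Suc i) \<longrightarrow> \<not> recovery w (xs i) u)"
    and B: "\<forall>i<k. arrow w (xs i) (xs (Suc i)) (ts (Suc i))"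
    unfolding open_path_def by blast
  obtain j where j: "j \<le> k" "ts j \<le> t'" "t' \<le> ts (Suc j)"
    using find_idx[of k ts t'] A h t' by auto
  let ?ts = "ts(Suc j := t')"
  have A': "\<forall>i\<le>j. ?ts i \<le> ?ts (Suc i) \<and> xs i \<in> S' \<and>
                 (\<forall>u. ?ts i < u \<and> u \<le> ?ts (Suc i) \<longrightarrow> \<not> recovery w (xs i) u)"
  proof (intro allI impI)
    fix i assume i: "i \<le> j"
    show "?ts i \<le> ?ts (Suc i) \<and> xs i \<in> S' \<and>
                 (\<forall>u. ?ts i < u \<and> u \<le> ?ts (Suc i) \<longrightarrow> \<not> recovery w (xs i) u)"
    proof (cases "i = j")
      case True then show ?thesis using A j sub by auto
    next
      case False then have "i < j" using i by simp
      then show ?thesis using A j sub by auto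
    qed
  qed
  have B': "\<forall>i<j. arrow w (xs i) (xs (Suc i)) (?ts (Suc i))"
    using B j by auto
  show ?thesis unfolding open_path_def
    apply (rule exI[of _ "xs j"])
    apply (rule conjI[OF t'(1)])
    apply (rule exI[of _ j], rule exI[of _ xs], rule exI[of _ ?ts])
    using h A' B' by simp
qed

lemma op_ends:
  assumes "open_path w S s x t y" shows "x \<in> S" "y \<in> S"
  using assms unfolding open_path_def by (metis le0 order_refl)+

lemma cv_local:
  assumes "\<forall>z\<in>box_sites W. \<forall>k i. w (z,k,i) = w' (z,k,i)"
  shows "crossed_vert w W t = crossed_vert w' W t"
  unfolding crossed_vert_def using op_local[OF assms] by simp

lemma ch_local:
  assumes "\<forall>z\<in>box_sites W. \<forall>k i. w (z,k,i) = w' (z,k,i)"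
  shows "crossed_horiz w W t = crossed_horiz w' W t"
  unfolding crossed_horiz_def using op_local[OF assms] by simp

definition FF :: "real \<Rightarrow> int \<times> nat \<times> nat \<Rightarrow> real measure" where
  "FF l = (\<lambda>(x, k, i). density lborel (exponential_density (chan_rate l k)))"

lemma CP_FF: "CP l = PiM UNIV (FF l)" unfolding CP_def FF_def by simp

lemma space_FF[simp]: "space (FF l i) = UNIV"
  unfolding FF_def by (cases i) auto

lemma space_CP[simp]: "space (CP l) = UNIV"
  unfolding CP_FF space_PiM by auto

lemma prob_FF: "0 < l \<Longrightarrow> prob_space (FF l i)"
  unfolding FF_def by (cases i) (auto intro!: prob_space_exponential_density simp: chan_rate_def)

lemma prob_CP: "0 < l \<Longrightarrow> prob_space (CP l)"
  unfolding CP_FF by (rule prob_space_PiM) (rule prob_FF)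

lemma shift_distr:
  assumes l: "0 < l"
  shows "distr (CP l) (CP l) (\<lambda>w. (\<lambda>(z,k,i). w (z+a,k,i))) = CP l"
proof -
  let ?f = "\<lambda>(z::int,k::nat,i::nat). (z+a,k,i)"
  have inj: "inj_on ?f UNIV" by (auto simp: inj_on_def)
  have eqM: "(\<lambda>x. FF l (?f x)) = FF l" by (auto simp: FF_def)
  have eqT: "(\<lambda>\<omega>. \<lambda>n\<in>UNIV. \<omega> (?f n)) = (\<lambda>w. (\<lambda>(z,k,i). w (z+a,k,i)))"
    by (auto simp: fun_eq_iff)
  from distr_PiM_reindex[of UNIV "FF l" ?f UNIV, OF prob_FF[OF l] inj]
  show ?thesis unfolding CP_FF eqM eqT by simp
qed

lemma shift_meas:
  "(\<lambda>w. (\<lambda>(z,k,i). w (z+a,k,i))) \<in> measurable (CP l) (CP l)"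
proof -
  have eqT: "(\<lambda>w. (\<lambda>(z,k,i). w (z+a,k,i))) = (\<lambda>\<omega>. \<lambda>n\<in>UNIV. (\<lambda>w. w ((\<lambda>(z,k,i). (z+a,k,i)) n)) \<omega>)"
    by (auto simp: fun_eq_iff)
  show ?thesis unfolding eqT unfolding CP_FF
    apply (rule measurable_restrict)
    subgoal for n
      apply (cases n)
      apply (simp add: FF_def)
      using measurable_component_singleton[of "(fst n + a, fst (snd n), snd (snd n))" UNIV "FF l"]
      by (simp add: FF_def)
    done
qed

lemma shift_measure:
  assumes l: "0 < l" and E: "E \<in> sets (CP l)"
  shows "measure (CP l) ((\<lambda>w. (\<lambda>(z,k,i). w (z+a,k,i))) -` E) = measure (CP l) E"
  using measure_distr[OF shift_meas E, of a] shift_distr[OF l, of a] by simp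

lemma indep_coords:
  assumes l: "0 < l"
  shows "prob_space.indep_vars (CP l) (FF l) (\<lambda>i \<omega>. \<omega> i) UNIV"
proof -
  interpret prob_space "CP l" by (rule prob_CP[OF l])
  have rv: "random_variable (FF l i) (\<lambda>\<omega>. \<omega> i)" for i
    unfolding CP_FF by (rule measurable_component_singleton) simp
  have c: "distr (CP l) (FF l i) (\<lambda>\<omega>. \<omega> i) = FF l i" for i
    unfolding CP_FF by (rule distr_PiM_component) (auto intro: prob_FF[OF l])
  have r: "(\<lambda>x. \<lambda>i\<in>UNIV. x i) = (\<lambda>x. x)" by (auto simp: fun_eq_iff)
  show ?thesis
    by (subst indep_vars_iff_distr_eq_PiM[OF _ rv]) (auto simp: c[unfolded CP_FF] r CP_FF)
qed

lemma indep_blocks: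
  assumes l: "0 < l" and J: "disjoint_family_on K L"
  shows "prob_space.indep_vars (CP l) (\<lambda>j. PiM (K j) (FF l)) (\<lambda>j \<omega>. restrict \<omega> (K j)) L"
proof -
  interpret prob_space "CP l" by (rule prob_CP[OF l])
  from indep_vars_restrict[OF indep_coords[OF l] _ J] show ?thesis by simp
qed

lemma block_event:
  assumes E: "E \<in> sets (CP l)"
    and dep: "\<And>w w'. (\<forall>i\<in>B. w i = w' i) \<Longrightarrow> w \<in> E \<longleftrightarrow> w' \<in> E"
  shows "\<exists>E' \<in> sets (PiM B (FF l)). \<forall>w. w \<in> E \<longleftrightarrow> restrict w B \<in> E'"
proof -
  let ?g = "\<lambda>v. \<lambda>i. if i \<in> B then v i else (0::real)"
  have g: "?g \<in> measurable (PiM B (FF l)) (CP l)"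
    unfolding CP_FF
  proof (rule measurable_PiM_single')
    fix i :: "int \<times> nat \<times> nat"
    show "(\<lambda>v. ?g v i) \<in> measurable (PiM B (FF l)) (FF l i)"
    proof (cases "i \<in> B")
      case True then show ?thesis by simp
    next
      case False then show ?thesis by simp
    qed
  qed (auto simp: space_PiM)
  define E' where "E' = ?g -` E \<inter> space (PiM B (FF l))"
  have "E' \<in> sets (PiM B (FF l))" unfolding E'_def using g E by (rule measurable_sets)
  moreover have "\<forall>w. w \<in> E \<longleftrightarrow> restrict w B \<in> E'"
  proof
    fix w :: "int \<times> nat \<times> nat \<Rightarrow> real"
    have "w \<in> E \<longleftrightarrow> ?g (restrict w B) \<in> E" by (rule dep) auto
    then show "w \<in> E \<longleftrightarrow> restrict w B \<in> E'" unfolding E'_def by (auto simp: space_PiM)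
  qed
  ultimately show ?thesis by blast
qed

lemma FF_null: "l \<le> 0 \<Longrightarrow> emeasure (FF l (x,1,i)) UNIV = 0"
  unfolding FF_def chan_rate_def
  apply (simp add: emeasure_density)
  apply (rule nn_integral_zero')
  apply (rule AE_I2)
  apply (auto simp: exponential_density_def intro!: ennreal_neg mult_nonpos_nonneg)
  done
lemma CP_null:
  assumes l: "l \<le> 0"
  shows "emeasure (CP l) A = 0"
proof -
  let ?M = "FF l"
  let ?I = "{(J, X). (J \<noteq> {} \<or> (UNIV::(int\<times>nat\<times>nat) set) = {}) \<and> finite J \<and> J \<subseteq> UNIV \<and> X \<in> (\<Pi> j\<in>J. sets (?M j))}"
  let ?G = "(\<lambda>(J, X). prod_emb UNIV ?M J (\<Pi>\<^sub>E j\<in>J. X j))"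
  let ?mu = "(\<lambda>(J, X). \<Prod>j\<in>J \<union> {i\<in>UNIV. emeasure (?M i) (space (?M i)) \<noteq> 1}. if j \<in> J then emeasure (?M j) (X j) else emeasure (?M j) (space (?M j)))"
  let ?i0 = "({(0::int,1::nat,0::nat)}, (\<lambda>_. {}) :: int\<times>nat\<times>nat \<Rightarrow> real set)"
  have i0: "?i0 \<in> ?I" by (simp add: Pi_iff)
  have G0: "?G ?i0 = {}" by (simp add: prod_emb_def)
  have inf: "infinite {i\<in>UNIV. emeasure (?M i) (space (?M i)) \<noteq> 1}"
  proof
    assume f: "finite {i\<in>UNIV. emeasure (?M i) (space (?M i)) \<noteq> 1}"
    have "range (\<lambda>x::int. (x,1::nat,0::nat)) \<subseteq> {i\<in>UNIV. emeasure (?M i) (space (?M i)) \<noteq> 1}"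
      using FF_null[OF l, of _ 0] by (simp add: image_subset_iff)
    then have "finite (range (\<lambda>x::int. (x,1::nat,0::nat)))" using f finite_subset by blast
    moreover have "inj (\<lambda>x::int. (x,1::nat,0::nat))" by (auto simp: inj_on_def)
    ultimately have "finite (UNIV::int set)" using finite_imageD by blast
    then show False by simp
  qed
  have inf2: "infinite ({(0::int,1::nat,0::nat)} \<union> {i\<in>UNIV. emeasure (?M i) (space (?M i)) \<noteq> 1})"
    using inf by simp
  have mu0: "?mu ?i0 = 1" unfolding prod.case by (rule prod.infinite[OF inf2])
  have nex: "\<not> (\<exists>\<mu>'. (\<forall>i\<in>?I. \<mu>' (?G i) = ?mu i) \<and> measure_space (\<Pi>\<^sub>E i\<in>UNIV. space (?M i)) (sigma_sets (\<Pi>\<^sub>E i\<in>UNIV. space (?M i)) (?G`?I)) \<mu>')"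
  proof
    assume "\<exists>\<mu>'. (\<forall>i\<in>?I. \<mu>' (?G i) = ?mu i) \<and> measure_space (\<Pi>\<^sub>E i\<in>UNIV. space (?M i)) (sigma_sets (\<Pi>\<^sub>E i\<in>UNIV. space (?M i)) (?G`?I)) \<mu>'"
    then obtain \<mu>' where a: "\<forall>i\<in>?I. \<mu>' (?G i) = ?mu i" and b: "measure_space (\<Pi>\<^sub>E i\<in>UNIV. space (?M i)) (sigma_sets (\<Pi>\<^sub>E i\<in>UNIV. space (?M i)) (?G`?I)) \<mu>'"
      by blast
    have "\<mu>' {} = 0" using b unfolding measure_space_def positive_def by blast
    moreover have "\<mu>' {} = 1" using bspec[OF a i0] G0 mu0 by simp
    ultimately show False by simp
  qed
  have "CP l = measure_of (\<Pi>\<^sub>E i\<in>UNIV. space (?M i)) (?G`?I) (\<lambda>_. 0)"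
    unfolding CP_FF PiM_def extend_measure_def
    apply (rule if_not_P)
    by (intro notI, elim conjE, rule notE[OF nex], assumption)
  then show ?thesis by (simp add: emeasure_sigma)
qed

lemma CP_measure_null: "l \<le> 0 \<Longrightarrow> measure (CP l) A = 0"
  by (simp add: measure_def CP_null)

lemma W_bound:
  fixes n m :: nat and \<delta> c W :: real
  assumes d: "0 < \<delta>" "\<delta> < 1" and n: "n \<ge> 1" and c: "c > 0"
    and m: "m = nat \<lceil>real n powr ((2 - \<delta>) / (2 * (1 - \<delta>)))\<rceil>"
    and W: "W \<le> c * real m powr (1 - \<delta>)"
  shows "W \<le> 2 * c * real n powr (1 - \<delta>/2)"
proof -
  let ?e = "(2 - \<delta>) / (2 * (1 - \<delta>))"
  let ?H = "real n powr ?e"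
  have e: "?e > 0" using d by (auto intro!: divide_pos_pos)
  have H1: "?H \<ge> 1" using n e by (simp add: ge_one_powr_ge_zero)
  have mH: "real m \<le> ?H + 1" using m H1 by linarith
  have m0: "real m \<ge> 0" by simp
  have "real m powr (1 - \<delta>) \<le> (2 * ?H) powr (1 - \<delta>)"
    using mH H1 d by (intro powr_mono2) auto
  also have "\<dots> = 2 powr (1 - \<delta>) * ?H powr (1 - \<delta>)"
    using H1 by (simp add: powr_mult)
  also have "?H powr (1 - \<delta>) = real n powr (1 - \<delta>/2)"
  proof -
    have "?e * (1 - \<delta>) = 1 - \<delta>/2" using d by (simp add: field_simps)
    then show ?thesis by (simp add: powr_powr)
  qed
  also have "2 powr (1 - \<delta>) \<le> (2::real) powr 1"
    using d by (intro powr_mono) auto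
  finally have "real m powr (1 - \<delta>) \<le> 2 * real n powr (1 - \<delta>/2)"
    by (simp add: mult_right_mono)
  then have "c * real m powr (1 - \<delta>) \<le> c * (2 * real n powr (1 - \<delta>/2))"
    using c by (intro mult_left_mono) auto
  then show ?thesis using W by linarith
qed

lemma final_bound:
  fixes n W :: nat and \<delta> c q :: real
  assumes d: "0 < \<delta>" "\<delta> < 1" and n: "n \<ge> 1" and c: "c > 0"
    and W: "real W \<le> 2 * c * real n powr (1 - \<delta>/2)"
    and q: "0 < q" "q < 1"
  shows "q ^ ((n+1) div (W+1)) \<le> (1/q) * exp (- (- ln q / (2*c+1)) * real n powr (\<delta>/2))"
proof -
  let ?J = "(n+1) div (W+1)"
  let ?A = "real n powr (1 - \<delta>/2)"
  let ?B = "real n powr (\<delta>/2)"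
  let ?x = "?B / (2*c+1)"
  have A1: "?A \<ge> 1" using n d by (simp add: ge_one_powr_ge_zero)
  have AB: "?A * ?B = real n" using n by (simp add: powr_add[symmetric])
  have B0: "?B \<ge> 0" by simp
  have "real W + 1 \<le> (2*c+1) * ?A" using W A1 by (simp add: algebra_simps)
  have Wp: "real W + 1 > 0" by simp
  have J1: "real ?J > real (n+1) / real (W+1) - 1"
  proof -
    have "real (n+1) = real ((W+1) * ?J + (n+1) mod (W+1))"
      by (simp only: mult_div_mod_eq)
    also have "\<dots> = real (W+1) * real ?J + real ((n+1) mod (W+1))"
      by (simp only: of_nat_add of_nat_mult)
    finally have "real (n+1) = real (W+1) * real ?J + real ((n+1) mod (W+1))" .
    moreover have "real ((n+1) mod (W+1)) < real (W+1)" by (simp only: of_nat_less_iff mod_less_divisor zero_less_Suc add.commute[of _ 1] plus_1_eq_Suc)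
    ultimately have "real (n+1) < real (W+1) * (real ?J + 1)" by (simp add: algebra_simps)
    then show ?thesis using Wp by (simp add: field_simps)
  qed
  have J2: "real (n+1) / real (W+1) \<ge> ?x"
  proof -
    have "?x = ?A * ?B / ((2*c+1) * ?A)" using A1 by simp
    also have "\<dots> \<le> real (n+1) / ((2*c+1) * ?A)"
      using AB A1 c by (intro divide_right_mono) auto
    also have "\<dots> \<le> real (n+1) / real (W+1)"
      using \<open>real W + 1 \<le> (2*c+1) * ?A\<close> Wp by (intro divide_left_mono) auto
    finally show ?thesis .
  qed
  have "q ^ ?J = q powr real ?J" using q by (simp add: powr_realpow)
  also have "\<dots> \<le> q powr (?x - 1)"
    using J1 J2 q by (intro powr_mono') auto
  also have "\<dots> = (1/q) * exp (ln q * ?x)"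
    using q by (simp add: powr_def exp_diff field_simps)
  also have "ln q * ?x = - (- ln q / (2*c+1)) * ?B" by simp
  finally show ?thesis .
qed

theorem lemma6:
  fixes \<delta> :: real
  assumes "0 < \<delta>" and "\<delta> < 1"
    and "\<exists>(wd::nat \<Rightarrow> nat) c p. filterlim wd at_top at_top \<and> c > 0 \<and> p > 0 \<and>
           (\<forall>n\<ge>1. real (wd n) \<le> c * real n powr (1 - \<delta>)) \<and>
           (\<forall>n\<ge>1. measure (CP lambda_c)
               {w \<in> space (CP lambda_c). crossed_horiz w (int (wd n)) (real n) \<and>
                                          crossed_vert w (int (wd n)) (real n)} \<ge> p)"
  shows "\<exists>c5>0. \<exists>c6>0. \<forall>n::nat\<ge>1.
           measure (CP lambda_c)
             {w \<in> space (CP lambda_c).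
                \<not> crossed_vert w (int n) (real n powr ((2 - \<delta>) / (2 * (1 - \<delta>))))}
           \<le> c5 * exp (- c6 * real n powr (\<delta> / 2))"
proof -
  obtain wd c p where c: "c > 0" and p: "p > 0"
    and wdb: "\<forall>n\<ge>1. real ((wd::nat\<Rightarrow>nat) n) \<le> c * real n powr (1 - \<delta>)"
    and hp: "\<forall>n\<ge>1. measure (CP lambda_c) {w \<in> space (CP lambda_c). crossed_horiz w (int (wd n)) (real n) \<and> crossed_vert w (int (wd n)) (real n)} \<ge> p"
    using assms(3) by blast
  show ?thesis
  proof (cases "lambda_c \<le> 0")
    case True
    show ?thesis
      by (rule exI[of _ 1], simp, rule exI[of _ 1], simp add: CP_measure_null[OF True])
  next
    case False
    then have l: "0 < lambda_c" by simp
    interpret P: prob_space "CP lambda_c" by (rule prob_CP[OF l])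
    define p' where "p' = min p (1/2)"
    define q where "q = 1 - p'"
    have q: "0 < q" "q < 1" using p by (auto simp: q_def p'_def)
    have c5: "1/q > 0" using q by simp
    have lnq: "ln q < 0" using q by simp
    have c6: "- ln q / (2*c+1) > 0" using lnq c by (intro divide_pos_pos) auto
    have main: "measure (CP lambda_c)
             {w \<in> space (CP lambda_c).
                \<not> crossed_vert w (int n) (real n powr ((2 - \<delta>) / (2 * (1 - \<delta>))))}
           \<le> (1/q) * exp (- (- ln q / (2*c+1)) * real n powr (\<delta> / 2))" if n: "n \<ge> 1" for n :: nat
    proof -
      define H where "H = real n powr ((2 - \<delta>) / (2 * (1 - \<delta>)))"
      define m where "m = nat \<lceil>H\<rceil>"
      define W where "W = wd m"
      define J where "J = (n+1) div (W+1)"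
      have e: "(2 - \<delta>) / (2 * (1 - \<delta>)) > 0" using assms(1,2) by (auto intro!: divide_pos_pos)
      have H1: "H \<ge> 1" unfolding H_def using n e by (simp add: ge_one_powr_ge_zero)
      have Hm: "H \<le> real m" unfolding m_def by linarith
      have m1: "m \<ge> 1" using H1 Hm by linarith
      have Wb: "real W \<le> 2 * c * real n powr (1 - \<delta>/2)"
        using W_bound[OF assms(1,2) n c m_def[unfolded H_def]] wdb m1 unfolding W_def by blast
      define E where "E = {w \<in> space (CP lambda_c). crossed_horiz w (int W) (real m) \<and> crossed_vert w (int W) (real m)}"
      have PE: "P.prob E \<ge> p" using hp m1 by (simp add: E_def W_def)
      have Esets: "E \<in> P.events"
      proof (rule ccontr)
        assume "E \<notin> P.events"
        then have "P.prob E = 0" by (rule measure_notin_sets)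
        then show False using PE p by simp
      qed
      define a where "a j = int (j * (W+1))" for j
      define T where "T j = (\<lambda>w::gc. (\<lambda>(z,k,i). w (z + a j, k, i)))" for j
      define Ej where "Ej j = T j -` E" for j
      define K where "K j = {(z::int,k::nat,i::nat). a j \<le> z \<and> z \<le> a j + int W}" for j
      have Ej_sets: "Ej j \<in> P.events" for j
        using measurable_sets[OF shift_meas Esets, of "a j"] unfolding Ej_def T_def by simp
      have PEj: "P.prob (Ej j) = P.prob E" for j
        using shift_measure[OF l Esets, of "a j"] unfolding Ej_def T_def by simp
      have dep: "w \<in> Ej j \<longleftrightarrow> w' \<in> Ej j" if agree: "\<forall>i\<in>K j. w i = w' i" for w w' j
      proof -
        have loc: "\<forall>z\<in>box_sites (int W). \<forall>k i. T j w (z,k,i) = T j w' (z,k,i)"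
          using agree unfolding T_def K_def box_sites_def by auto
        show ?thesis unfolding Ej_def E_def using cv_local[OF loc] ch_local[OF loc] by simp
      qed
      have Ej': "\<exists>E' \<in> sets (PiM (K j) (FF lambda_c)). \<forall>w. w \<in> Ej j \<longleftrightarrow> restrict w (K j) \<in> E'" for j
        by (rule block_event[OF Ej_sets]) (rule dep, blast)
      define C where "C j = space (CP lambda_c) - Ej j" for j
      have C_in: "C j \<in> {(\<lambda>\<omega>. restrict \<omega> (K j)) -` A \<inter> space (CP lambda_c) | A. A \<in> sets (PiM (K j) (FF lambda_c))}" for j
      proof -
        obtain E' where E': "E' \<in> sets (PiM (K j) (FF lambda_c))" "\<forall>w. w \<in> Ej j \<longleftrightarrow> restrict w (K j) \<in> E'"
          using Ej' by blast
        have "C j = (\<lambda>\<omega>. restrict \<omega> (K j)) -` (space (PiM (K j) (FF lambda_c)) - E') \<inter> space (CP lambda_c)"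
          using E'(2) unfolding C_def by (auto simp: space_PiM)
        moreover have "space (PiM (K j) (FF lambda_c)) - E' \<in> sets (PiM (K j) (FF lambda_c))"
          using E'(1) by blast
        ultimately show ?thesis by blast
      qed
      have disj: "disjoint_family_on K {..<J}"
        unfolding disjoint_family_on_def
      proof (intro ballI impI)
        fix j j' assume "j \<in> {..<J}" "j' \<in> {..<J}" "j \<noteq> j'"
        then consider "j < j'" | "j' < j" by linarith
        then show "K j \<inter> K j' = {}"
        proof cases
          case 1
          then have "Suc j * (W+1) \<le> j' * (W+1)" by (intro mult_le_mono1) simp
          then have "j * (W+1) + W < j' * (W+1)" by simp
          then have "a j + int W < a j'" unfolding a_def by (metis of_nat_add of_nat_less_iff)
          then show ?thesis unfolding K_def by auto
        next
          case 2
          then have "Suc j' * (W+1) \<le> j * (W+1)" by (intro mult_le_mono1) simp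
          then have "j' * (W+1) + W < j * (W+1)" by simp
          then have "a j' + int W < a j" unfolding a_def by (metis of_nat_add of_nat_less_iff)
          then show ?thesis unfolding K_def by auto
        qed
      qed
      have ind: "P.indep_sets (\<lambda>j. {(\<lambda>\<omega>. restrict \<omega> (K j)) -` A \<inter> space (CP lambda_c) | A. A \<in> sets (PiM (K j) (FF lambda_c))}) {..<J}"
        using indep_blocks[OF l disj] unfolding P.indep_vars_def2 by blast
      have cover: "crossed_vert w (int n) H" if j: "j < J" and wE: "w \<in> Ej j" for w j
      proof -
        have "Suc j * (W+1) \<le> J * (W+1)" using j by (intro mult_le_mono1) simp
        moreover have "J * (W+1) \<le> n + 1" unfolding J_def by (rule div_times_less_eq_dividend)
        ultimately have "j * (W+1) + W \<le> n" by simp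
        then have aj: "a j + int W \<le> int n" unfolding a_def by (metis of_nat_add of_nat_le_iff)
        have "crossed_vert (T j w) (int W) (real m)" using wE unfolding Ej_def E_def by simp
        then obtain x y where xy: "x \<in> box_sites (int W)" "y \<in> box_sites (int W)"
          and op: "open_path (\<lambda>(z,k,i). w (z + a j, k, i)) (box_sites (int W)) 0 x (real m) y"
          unfolding crossed_vert_def T_def by blast
        have a0: "a j \<ge> 0" unfolding a_def by simp
        have op2: "open_path w {z. z - a j \<in> box_sites (int W)} 0 (x + a j) (real m) (y + a j)"
          by (rule op_shift[OF op])
        have sub: "{z. z - a j \<in> box_sites (int W)} \<subseteq> box_sites (int n)"
          using aj a0 unfolding box_sites_def by auto
        obtain y' where op3: "open_path w (box_sites (int n)) 0 (x + a j) H y'"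
          using op_trunc[OF op2 sub, of H] H1 Hm by auto
        show ?thesis unfolding crossed_vert_def using op3 op_ends[OF op3] by blast
      qed
      have bound: "measure (CP lambda_c) {w \<in> space (CP lambda_c). \<not> crossed_vert w (int n) H} \<le> q ^ J"
      proof (cases "J = 0")
        case True
        then show ?thesis by (simp add: P.prob_le_1)
      next
        case False
        have sub: "{w \<in> space (CP lambda_c). \<not> crossed_vert w (int n) H} \<subseteq> (\<Inter>j\<in>{..<J}. C j)"
          unfolding C_def using cover by auto
        have Cev: "C j \<in> P.events" for j unfolding C_def using Ej_sets by blast
        have Iev: "(\<Inter>j\<in>{..<J}. C j) \<in> P.events"
          using False Cev by (intro sets.finite_INT) auto
        have "measure (CP lambda_c) {w \<in> space (CP lambda_c). \<not> crossed_vert w (int n) H} \<le> P.prob (\<Inter>j\<in>{..<J}. C j)"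
          by (rule P.finite_measure_mono[OF sub Iev])
        also have "\<dots> = (\<Prod>j\<in>{..<J}. P.prob (C j))"
          using False C_in by (intro P.indep_setsD[OF ind]) auto
        also have "\<dots> = (\<Prod>j\<in>{..<J}. 1 - P.prob E)"
          unfolding C_def using P.prob_compl[OF Ej_sets] PEj by simp
        also have "\<dots> = (1 - P.prob E) ^ J" by simp
        also have "\<dots> \<le> q ^ J"
        proof (rule power_mono)
          show "1 - P.prob E \<le> q" using PE unfolding q_def p'_def by linarith
          show "0 \<le> 1 - P.prob E" using P.prob_le_1 by simp
        qed
        finally show ?thesis .
      qed
      show ?thesis using bound final_bound[OF assms(1,2) n c Wb q] unfolding H_def J_def by linarith
    qed
    show ?thesis
      by (rule exI[of _ "1/q"], rule conjI[OF c5], rule exI[of _ "- ln q / (2*c+1)"], rule conjI[OF c6])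
         (use main in blast)
  qed
qed

end
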